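(* Let $K$ be a field and let $f\colon\mathbb Z^k\to K$ be a hypergeometric term on $\mathbb Z^k$. Then either $f$ is a zero divisor, or $f$ is nonzero on arbitrarily large $k$-dimensional boxes, i.e. for every $n\ge0$ there is a $k$-dimensional box of size $n$ at every point of which $f$ is nonzero.
   Context: A hypergeometric term on $\mathbb Z^k$ over $K$ is a function $f\colon\mathbb Z^k\to K$ such that for each $i\in\{1,\dots,k\}$ there are nonzero polynomials $A_i,B_i\in K[\vec z]$ with $A_i(\vec z)f(\vec z)=B_i(\vec z)f(\vec z+\vec e_i)$ for all $\vec z\in\mathbb Z^k$. $f$ is a zero divisor if there is a nonzero polynomial $p$ with $p(\vec z)f(\vec z)=0$ for all $\vec z$. A $k$-dimensional box of size $n$ is $\{\vec z\in\mathbb Z^k: c_i\le z_i\le c_i+n,\ i=1,\dots,k\}$ for some $c_i\in\mathbb Z$. *)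

theory Defs
  imports Main
begin

text \<open>A polynomial in the variables z_i (i ranging over the finite index type 'k)
  with coefficients in 'a is represented by its coefficient function, mapping
  exponent vectors (monomials) to coefficients, with finite support.\<close>

definition is_mpoly :: "(('k \<Rightarrow> nat) \<Rightarrow> 'a::zero) \<Rightarrow> bool" where
  "is_mpoly c \<longleftrightarrow> finite {m. c m \<noteq> 0}"

definition mpoly_eval :: "(('k::finite \<Rightarrow> nat) \<Rightarrow> 'a::field) \<Rightarrow> ('k \<Rightarrow> int) \<Rightarrow> 'a" where
  "mpoly_eval c z = (\<Sum>m\<in>{m. c m \<noteq> 0}. c m * (\<Prod>i\<in>UNIV. of_int (z i) ^ m i))"

definition hypergeometric_term :: "(('k::finite \<Rightarrow> int) \<Rightarrow> 'a::field) \<Rightarrow> bool" where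
  "hypergeometric_term f \<longleftrightarrow>
     (\<forall>i. \<exists>A B. is_mpoly A \<and> is_mpoly B \<and> A \<noteq> (\<lambda>_. 0) \<and> B \<noteq> (\<lambda>_. 0) \<and>
        (\<forall>z. mpoly_eval A z * f z = mpoly_eval B z * f (z(i := z i + 1))))"

definition zero_divisor_term :: "(('k::finite \<Rightarrow> int) \<Rightarrow> 'a::field) \<Rightarrow> bool" where
  "zero_divisor_term f \<longleftrightarrow>
     (\<exists>p. is_mpoly p \<and> p \<noteq> (\<lambda>_. 0) \<and> (\<forall>z. mpoly_eval p z * f z = 0))"

definition box_of_size :: "('k \<Rightarrow> int) \<Rightarrow> nat \<Rightarrow> ('k \<Rightarrow> int) set" where
  "box_of_size c n = {z. \<forall>i. c i \<le> z i \<and> z i \<le> c i + int n}"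

end

theory Submission imports Defs "HOL-Computational_Algebra.Computational_Algebra" begin

definition mon :: "('k::finite \<Rightarrow> int) \<Rightarrow> ('k \<Rightarrow> nat) \<Rightarrow> 'a::field" where
  "mon z m = (\<Prod>i\<in>UNIV. of_int (z i) ^ m i)"

lemma eval_superset:
  fixes p :: "('k::finite \<Rightarrow> nat) \<Rightarrow> 'a::field"
  assumes "finite S" "{m. p m \<noteq> 0} \<subseteq> S"
  shows "mpoly_eval p z = (\<Sum>m\<in>S. p m * mon z m)"
  unfolding mpoly_eval_def mon_def
  by (rule sum.mono_neutral_left) (use assms in auto)

lemma eval_zero [simp]: "mpoly_eval (\<lambda>_. 0) z = 0"
  by (simp add: mpoly_eval_def)

lemma mon_add: "mon z (\<lambda>i. a i + b i) = mon z a * mon z b"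
  by (simp add: mon_def power_add prod.distrib)

definition PF :: "(('k::finite \<Rightarrow> int) \<Rightarrow> 'a::field) \<Rightarrow> bool" where
  "PF g \<longleftrightarrow> (\<exists>p. is_mpoly p \<and> (\<forall>z. mpoly_eval p z = g z))"

lemma PF_const: "PF (\<lambda>z::'k::finite \<Rightarrow> int. c)"
proof -
  define p where "p = (\<lambda>m::'k \<Rightarrow> nat. if m = (\<lambda>_. 0) then c else 0)"
  have s: "{m. p m \<noteq> 0} \<subseteq> {\<lambda>_. 0}" by (auto simp: p_def split: if_splits)
  hence "is_mpoly p" unfolding is_mpoly_def using finite_subset by blast
  moreover have "mpoly_eval p z = c" for z
    using eval_superset[OF _ s] by (simp add: p_def mon_def)
  ultimately show ?thesis unfolding PF_def by blast
qed

lemma PF_var: "PF (\<lambda>z::'k::finite \<Rightarrow> int. of_int (z i) :: 'a::field)"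
proof -
  define e where "e = (\<lambda>j::'k. if j = i then 1 else (0::nat))"
  define p where "p = (\<lambda>m::'k \<Rightarrow> nat. if m = e then (1::'a) else 0)"
  have s: "{m. p m \<noteq> 0} \<subseteq> {e}" by (auto simp: p_def split: if_splits)
  hence "is_mpoly p" unfolding is_mpoly_def using finite_subset by blast
  moreover have "mpoly_eval p z = of_int (z i)" for z
  proof -
    have "mpoly_eval p z = mon z e" using eval_superset[OF _ s] by (simp add: p_def)
    also have "\<dots> = (\<Prod>j\<in>UNIV. if j = i then of_int (z i) else 1)"
      unfolding mon_def e_def by (rule prod.cong) auto
    finally show ?thesis by simp
  qed
  ultimately show ?thesis unfolding PF_def by blast
qed

lemma PF_add: "PF (g :: ('k::finite \<Rightarrow> int) \<Rightarrow> 'a::field) \<Longrightarrow> PF h \<Longrightarrow> PF (\<lambda>z. g z + h z)"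
proof -
  assume "PF g" "PF h"
  then obtain p q where p: "is_mpoly p" "\<And>z. mpoly_eval p z = g z"
    and q: "is_mpoly q" "\<And>z. mpoly_eval q z = h z" unfolding PF_def by blast
  define S where "S = {m. p m \<noteq> 0} \<union> {m. q m \<noteq> 0}"
  have fS: "finite S" using p q unfolding S_def is_mpoly_def by auto
  have s: "{m. p m + q m \<noteq> 0} \<subseteq> S" unfolding S_def by auto
  have "is_mpoly (\<lambda>m. p m + q m)" unfolding is_mpoly_def using finite_subset[OF s fS] .
  moreover have "mpoly_eval (\<lambda>m. p m + q m) z = g z + h z" for z
    using eval_superset[OF fS s, of z] eval_superset[OF fS, of p z] eval_superset[OF fS, of q z]
      p q by (auto simp: S_def distrib_right sum.distrib)
  ultimately show ?thesis unfolding PF_def by blast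
qed

lemma PF_mult: "PF (g :: ('k::finite \<Rightarrow> int) \<Rightarrow> 'a::field) \<Longrightarrow> PF h \<Longrightarrow> PF (\<lambda>z. g z * h z)"
proof -
  assume "PF g" "PF h"
  then obtain p q where p: "is_mpoly p" "\<And>z. mpoly_eval p z = g z"
    and q: "is_mpoly q" "\<And>z. mpoly_eval q z = h z" unfolding PF_def by blast
  define P where "P = {m. p m \<noteq> 0} \<times> {m. q m \<noteq> 0}"
  have fP: "finite P" using p q unfolding P_def is_mpoly_def by auto
  define s where "s = (\<lambda>x::('k\<Rightarrow>nat)\<times>('k\<Rightarrow>nat). \<lambda>i. fst x i + snd x i)"
  define r where "r = (\<lambda>m. \<Sum>x\<in>{x\<in>P. s x = m}. p (fst x) * q (snd x))"
  have fS: "finite (s ` P)" using fP by simp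
  have sub: "{m. r m \<noteq> 0} \<subseteq> s ` P"
  proof
    fix m assume "m \<in> {m. r m \<noteq> 0}"
    then have "r m \<noteq> 0" by simp
    then have "{x\<in>P. s x = m} \<noteq> {}" unfolding r_def by (rule contrapos_nn) (simp only: sum.empty)
    then show "m \<in> s ` P" by blast
  qed
  have "is_mpoly r" unfolding is_mpoly_def using finite_subset[OF sub fS] .
  moreover have "mpoly_eval r z = g z * h z" for z
  proof -
    have "mpoly_eval r z = (\<Sum>m\<in>s ` P. r m * mon z m)" by (rule eval_superset[OF fS sub])
    also have "\<dots> = (\<Sum>m\<in>s ` P. \<Sum>x\<in>{x\<in>P. s x = m}. p (fst x) * q (snd x) * mon z (s x))"
      unfolding r_def sum_distrib_right by (intro sum.cong refl) auto
    also have "\<dots> = (\<Sum>x\<in>P. p (fst x) * q (snd x) * mon z (s x))"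
      by (rule sum.group[OF fP fS]) auto
    also have "\<dots> = (\<Sum>x\<in>P. (p (fst x) * mon z (fst x)) * (q (snd x) * mon z (snd x)))"
      unfolding s_def mon_add by (intro sum.cong refl) (simp add: ac_simps)
    also have "\<dots> = (\<Sum>a\<in>{m. p m \<noteq> 0}. p a * mon z a) * (\<Sum>b\<in>{m. q m \<noteq> 0}. q b * mon z b)"
      unfolding P_def sum_product sum.cartesian_product by (simp add: case_prod_beta)
    also have "\<dots> = g z * h z"
      using p q by (simp add: mpoly_eval_def mon_def)
    finally show ?thesis .
  qed
  ultimately show ?thesis unfolding PF_def by blast
qed

lemma PF_sum: "finite I \<Longrightarrow> (\<And>x. x \<in> I \<Longrightarrow> PF (g x)) \<Longrightarrow> PF (\<lambda>z. \<Sum>x\<in>I. g x z)"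
  by (induction I rule: finite_induct) (auto intro!: PF_add PF_const)

lemma PF_prod: "finite I \<Longrightarrow> (\<And>x. x \<in> I \<Longrightarrow> PF (g x)) \<Longrightarrow> PF (\<lambda>z. \<Prod>x\<in>I. g x z)"
  by (induction I rule: finite_induct) (auto intro!: PF_mult PF_const)

lemma PF_power: "PF g \<Longrightarrow> PF (\<lambda>z. g z ^ n)"
  by (induction n) (auto intro!: PF_mult PF_const)

lemma PF_shift:
  fixes A :: "('k::finite \<Rightarrow> nat) \<Rightarrow> 'a::field"
  assumes "is_mpoly A"
  shows "PF (\<lambda>z. mpoly_eval A (\<lambda>i. z i + w i))"
proof -
  have "PF (\<lambda>z. \<Sum>m\<in>{m. A m \<noteq> 0}. A m * (\<Prod>i\<in>UNIV. (of_int (z i) + of_int (w i)) ^ m i))"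
    using assms unfolding is_mpoly_def
    by (intro PF_sum PF_mult PF_const PF_prod PF_power PF_add PF_var) auto
  then show ?thesis by (simp add: mpoly_eval_def)
qed

lemma digits_unique:
  fixes a b :: "nat \<Rightarrow> nat"
  assumes "\<forall>n. a n < D" "\<forall>n. b n < D" "(\<Sum>n<M. a n * D^n) = (\<Sum>n<M. b n * D^n)" "n < M"
  shows "a n = b n"
  using assms
proof (induction M arbitrary: a b n)
  case 0 then show ?case by simp
next
  case (Suc M)
  have D: "D > 0" using Suc.prems(1) by (metis gr_zeroI less_nat_zero_code)
  have e: "(\<Sum>n<Suc M. c n * D^n) = c 0 + D * (\<Sum>n<M. c (Suc n) * D^n)" for c :: "nat \<Rightarrow> nat"
    unfolding sum.lessThan_Suc_shift by (simp add: sum_distrib_left ac_simps del: sum.lessThan_Suc)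
  have eq: "a 0 + D * (\<Sum>n<M. a (Suc n) * D^n) = b 0 + D * (\<Sum>n<M. b (Suc n) * D^n)"
    using Suc.prems(3) unfolding e .
  have a0: "a 0 = b 0"
    using arg_cong[OF eq, of "\<lambda>x. x mod D"] Suc.prems(1,2) by simp
  with eq D have "(\<Sum>n<M. a (Suc n) * D^n) = (\<Sum>n<M. b (Suc n) * D^n)" by simp
  show ?case
  proof (cases n)
    case 0 then show ?thesis using a0 by simp
  next
    case (Suc n')
    then show ?thesis
      using Suc.IH[of "\<lambda>n. a (Suc n)" "\<lambda>n. b (Suc n)" n'] Suc.prems
        \<open>(\<Sum>n<M. a (Suc n) * D^n) = _\<close> by auto
  qed
qed

lemma weight_reindex:
  fixes g :: "'k::finite \<Rightarrow> nat" and m :: "'k \<Rightarrow> nat"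
  assumes "inj g" "\<forall>i. g i < M"
  shows "(\<Sum>i\<in>UNIV. m i * D^(g i)) = (\<Sum>n<M. (if n \<in> range g then m (the_inv g n) else 0) * D^n)"
proof -
  have "(\<Sum>n<M. (if n \<in> range g then m (the_inv g n) else 0) * D^n)
      = (\<Sum>n\<in>range g. (if n \<in> range g then m (the_inv g n) else 0) * D^n)"
    by (rule sum.mono_neutral_right) (use assms in auto)
  also have "\<dots> = (\<Sum>i\<in>UNIV. (if g i \<in> range g then m (the_inv g (g i)) else 0) * D^(g i))"
    by (rule sum.reindex[unfolded comp_def]) (use assms in auto)
  also have "\<dots> = (\<Sum>i\<in>UNIV. m i * D^(g i))"
    using assms(1) by (simp add: the_inv_f_f)
  finally show ?thesis by simp
qed

lemma weight_inj:
  fixes g :: "'k::finite \<Rightarrow> nat" and m m' :: "'k \<Rightarrow> nat"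
  assumes "inj g" "\<forall>i. m i < D" "\<forall>i. m' i < D"
    and eq: "(\<Sum>i\<in>UNIV. m i * D^(g i)) = (\<Sum>i\<in>UNIV. m' i * D^(g i))"
  shows "m = m'"
proof
  fix i
  define M where "M = Suc (Max (range g))"
  have gM: "\<forall>i. g i < M" unfolding M_def by (simp add: le_imp_less_Suc)
  define a where "a = (\<lambda>n. if n \<in> range g then m (the_inv g n) else 0)"
  define b where "b = (\<lambda>n. if n \<in> range g then m' (the_inv g n) else 0)"
  have "a (g i) = b (g i)"
  proof (rule digits_unique[of a D b M])
    show "\<forall>n. a n < D" using assms(2) unfolding a_def by (metis gr0I not_less_zero)
    show "\<forall>n. b n < D" using assms(3) unfolding b_def by (metis gr0I not_less_zero)
    show "(\<Sum>n<M. a n * D ^ n) = (\<Sum>n<M. b n * D ^ n)"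
      using eq weight_reindex[OF assms(1) gM, of m D] weight_reindex[OF assms(1) gM, of m' D]
      unfolding a_def b_def by simp
    show "g i < M" using gM by simp
  qed
  then show "m i = m' i" using assms(1) unfolding a_def b_def by (simp add: the_inv_f_f)
qed

lemma of_int_inj_char0:
  assumes "CHAR('a::ring_1) = 0"
  shows "inj (of_int :: int \<Rightarrow> 'a)"
proof (rule injI)
  fix x y :: int assume "(of_int x :: 'a) = of_int y"
  then have 0: "(of_int (x - y) :: 'a) = 0" by simp
  have nz: "(of_nat n :: 'a) = 0 \<Longrightarrow> n = 0" for n
    using assms CHAR_eq0_iff by blast
  show "x = y"
  proof (cases "x - y \<ge> 0")
    case True
    then have "(of_nat (nat (x - y)) :: 'a) = 0" using 0 by (metis of_int_of_nat_eq int_nat_eq)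
    then show ?thesis using nz True by fastforce
  next
    case False
    then have "(of_nat (nat (y - x)) :: 'a) = 0" using 0
      by (metis add.inverse_neutral minus_diff_eq of_int_minus of_int_of_nat_eq nat_0_le not_le order_less_imp_le neg_0_le_iff_le)
    then show ?thesis using nz False by fastforce
  qed
qed

lemma kron_eval:
  fixes p :: "('k::finite \<Rightarrow> nat) \<Rightarrow> 'a::field"
  shows "mpoly_eval p (\<lambda>i. t ^ (D^(g i))) =
     poly (\<Sum>m\<in>{m. p m \<noteq> 0}. monom (p m) (\<Sum>i\<in>UNIV. m i * D^(g i))) (of_int t)"
proof -
  have "mon (\<lambda>i. t ^ (D^(g i))) m = (of_int t :: 'a) ^ (\<Sum>i\<in>UNIV. m i * D^(g i))" for m
    unfolding mon_def power_sum by (simp add: power_mult[symmetric] mult.commute)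
  then show ?thesis
    by (simp add: mpoly_eval_def poly_sum poly_monom mon_def)
qed

lemma kronecker:
  fixes F :: "(('k::finite \<Rightarrow> nat) \<Rightarrow> 'a::field) set"
  assumes char: "CHAR('a) = 0" and fin: "finite F"
    and F: "\<And>p. p \<in> F \<Longrightarrow> is_mpoly p \<and> p \<noteq> (\<lambda>_. 0)"
  shows "\<exists>z. \<forall>p\<in>F. mpoly_eval p z \<noteq> 0"
proof -
  obtain g :: "'k \<Rightarrow> nat" and n where "g ` UNIV = {i. i < n}" "inj_on g UNIV"
    using finite_imp_inj_to_nat_seg[of "UNIV :: 'k set"] by auto
  then have ginj: "inj g" by simp
  define U where "U = (\<Union>p\<in>F. \<Union>m\<in>{m. p m \<noteq> 0}. range m)"
  have finU: "finite U" unfolding U_def using fin F unfolding is_mpoly_def by auto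
  define D where "D = Suc (Max U)"
  have small: "m i < D" if "p \<in> F" "p m \<noteq> 0" for p m i
  proof -
    have "m i \<in> U" unfolding U_def using that by blast
    then show ?thesis unfolding D_def using finU by (simp add: le_imp_less_Suc)
  qed
  define N where "N = (\<lambda>m::'k \<Rightarrow> nat. \<Sum>i\<in>UNIV. m i * D^(g i))"
  define Q where "Q = (\<lambda>p::('k \<Rightarrow> nat) \<Rightarrow> 'a. \<Sum>m\<in>{m. p m \<noteq> 0}. monom (p m) (N m))"
  have Qnz: "Q p \<noteq> 0" if "p \<in> F" for p
  proof -
    from F[OF that] obtain m0 where m0: "p m0 \<noteq> 0" by fastforce
    have fs: "finite {m. p m \<noteq> 0}" using F[OF that] unfolding is_mpoly_def by simp
    have "coeff (Q p) (N m0) = (\<Sum>m\<in>{m. p m \<noteq> 0}. if m = m0 then p m else 0)"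
      unfolding Q_def coeff_sum coeff_monom
    proof (intro sum.cong refl)
      fix m assume "m \<in> {m. p m \<noteq> 0}"
      then have "N m = N m0 \<longleftrightarrow> m = m0"
        using weight_inj[OF ginj, of m D m0] small[OF that] m0 unfolding N_def by auto
      then show "(if N m = N m0 then p m else 0) = (if m = m0 then p m else 0)" by simp
    qed
    also have "\<dots> = p m0" using fs m0 by (simp add: sum.delta')
    finally show ?thesis using m0 by auto
  qed
  define PP where "PP = (\<Prod>p\<in>F. Q p)"
  have "PP \<noteq> 0" unfolding PP_def using fin Qnz by (simp add: prod_zero_iff)
  then have "finite {x. poly PP x = 0}" by (rule poly_roots_finite)
  then have "finite (of_int -` {x. poly PP x = 0} :: int set)"
    using of_int_inj_char0[OF char] by (intro finite_vimageI) auto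
  then obtain t :: int where t: "t \<notin> of_int -` {x. poly PP x = 0}"
    using ex_new_if_finite[OF infinite_UNIV_int] by blast
  show ?thesis
  proof (intro exI ballI)
    fix p assume "p \<in> F"
    have "poly PP (of_int t) \<noteq> 0" using t by simp
    then have "poly (Q p) (of_int t) \<noteq> 0"
      unfolding PP_def poly_prod using fin \<open>p \<in> F\<close> by (simp add: prod_zero_iff) 
    then show "mpoly_eval p (\<lambda>i. t ^ (D^(g i))) \<noteq> 0"
      unfolding kron_eval Q_def N_def .
  qed
qed

lemma fermat_char:
  assumes "CHAR('a::field) > 0"
  shows "(of_int t :: 'a) ^ CHAR('a) = of_int t"
proof -
  have pr: "prime CHAR('a)" using prime_CHAR_semidom[OF assms] .
  have nat: "(of_nat n :: 'a) ^ CHAR('a) = of_nat n" for n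
  proof -
    have "(of_nat n :: 'a) = (\<Sum>j<n. 1)" by simp
    then have "(of_nat n :: 'a) ^ CHAR('a) = (\<Sum>j<n. 1 ^ CHAR('a))"
      using freshmans_dream_sum[OF pr refl, of "\<lambda>_. 1::'a" "{..<n}"] by simp
    then show ?thesis by simp
  qed
  show ?thesis
  proof (cases "t \<ge> 0")
    case True
    then have "(of_int t :: 'a) = of_nat (nat t)" by simp
    then show ?thesis using nat by simp
  next
    case False
    then have "(of_int t :: 'a) = - of_nat (nat (- t))" by simp
    then show ?thesis using nat minus_power_prime_CHAR[OF refl pr] by simp
  qed
qed

lemma charp_zero_divisor:
  fixes f :: "('k::finite \<Rightarrow> int) \<Rightarrow> 'a::field"
  assumes "CHAR('a) > 0"
  shows "zero_divisor_term f"
proof -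
  define P where "P = CHAR('a)"
  have P2: "P \<ge> 2" unfolding P_def using prime_CHAR_semidom[OF assms] prime_ge_2_nat by blast
  define i :: 'k where "i = undefined"
  define e1 where "e1 = (\<lambda>j::'k. if j = i then 1 else (0::nat))"
  define ep where "ep = (\<lambda>j::'k. if j = i then P else (0::nat))"
  have ne: "ep \<noteq> e1" using P2 unfolding ep_def e1_def by (metis numeral_le_one_iff semiring_norm(69))
  define q where "q = (\<lambda>m. if m = ep then (1::'a) else if m = e1 then -1 else 0)"
  have s: "{m. q m \<noteq> 0} \<subseteq> {ep, e1}" unfolding q_def by auto
  have isq: "is_mpoly q" unfolding is_mpoly_def using finite_subset[OF s] by simp
  have qnz: "q \<noteq> (\<lambda>_. 0)" unfolding q_def by (metis one_neq_zero)
  have mon: "mon z (\<lambda>j::'k. if j = i then k else 0) = (of_int (z i) :: 'a) ^ k" for z k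
  proof -
    have "mon z (\<lambda>j::'k. if j = i then k else 0) = (\<Prod>j\<in>UNIV. if j = i then (of_int (z i) :: 'a) ^ k else 1)"
      unfolding mon_def by (rule prod.cong) auto
    then show ?thesis by simp
  qed
  have "mpoly_eval q z = 0" for z
  proof -
    have "mpoly_eval q z = (\<Sum>m\<in>{ep, e1}. q m * mon z m)" by (rule eval_superset[OF _ s]) simp
    also have "\<dots> = mon z ep - mon z e1" using ne by (simp add: q_def)
    also have "\<dots> = (of_int (z i) :: 'a) ^ P - of_int (z i) ^ 1"
      unfolding ep_def e1_def mon ..
    also have "\<dots> = 0" unfolding P_def using fermat_char[OF assms] by simp
    finally show ?thesis .
  qed
  then show ?thesis unfolding zero_divisor_term_def using isq qnz by auto
qed

lemma propagate:
  fixes f :: "('k::finite \<Rightarrow> int) \<Rightarrow> 'a::field"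
  assumes rel: "\<And>i z. A i z * f z = B i z * f (z(i := z i + 1))"
    and fc: "f c \<noteq> 0" and Anz: "\<And>z i. z \<in> box_of_size c n \<Longrightarrow> A i z \<noteq> 0"
    and z: "z \<in> box_of_size c n"
  shows "f z \<noteq> 0"
  using z
proof (induction "\<Sum>i\<in>UNIV. nat (z i - c i)" arbitrary: z rule: less_induct)
  case less
  show ?case
  proof (cases "z = c")
    case True then show ?thesis using fc by simp
  next
    case False
    then obtain i where "z i \<noteq> c i" by auto
    moreover have "c i \<le> z i" using less.prems unfolding box_of_size_def by blast
    ultimately have zi: "z i > c i" by linarith
    define z' where "z' = z(i := z i - 1)"
    have z'b: "z' \<in> box_of_size c n" unfolding box_of_size_def
    proof (intro CollectI allI)
      fix j
      have "c j \<le> z j \<and> z j \<le> c j + int n" using less.prems unfolding box_of_size_def by blast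
      then show "c j \<le> z' j \<and> z' j \<le> c j + int n" using zi unfolding z'_def by auto
    qed
    have "(\<Sum>j\<in>UNIV. nat (z' j - c j)) < (\<Sum>j\<in>UNIV. nat (z j - c j))"
      by (rule sum_strict_mono_ex1) (use zi in \<open>auto simp: z'_def\<close>)
    from less.hyps[OF this z'b] have "f z' \<noteq> 0" .
    moreover have "A i z' \<noteq> 0" using Anz[OF z'b] .
    ultimately have "A i z' * f z' \<noteq> 0" by simp
    then have "B i z' * f (z'(i := z' i + 1)) \<noteq> 0" using rel[of i z'] by simp
    moreover have "z'(i := z' i + 1) = z" unfolding z'_def by auto
    ultimately show ?thesis by auto
  qed
qed

theorem lemmaB17:
  fixes f :: "('k::finite \<Rightarrow> int) \<Rightarrow> 'a::field"
  assumes "hypergeometric_term f"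
  shows "zero_divisor_term f \<or> (\<forall>n::nat. \<exists>c. \<forall>z\<in>box_of_size c n. f z \<noteq> 0)"
proof (cases "zero_divisor_term f")
  case True then show ?thesis by simp
next
  case False
  note nzd = False
  have char: "CHAR('a) = 0" using charp_zero_divisor[of f] nzd by (metis gr0I)
  obtain A B where AB: "\<And>i. is_mpoly (A i) \<and> is_mpoly (B i) \<and> A i \<noteq> (\<lambda>_. 0) \<and> B i \<noteq> (\<lambda>_. 0) \<and>
        (\<forall>z. mpoly_eval (A i) z * f z = mpoly_eval (B i) z * f (z(i := z i + 1)))"
    using assms unfolding hypergeometric_term_def by metis
  have "\<forall>n::nat. \<exists>c. \<forall>z\<in>box_of_size c n. f z \<noteq> 0"
  proof
    fix n :: nat
    define W where "W = box_of_size (\<lambda>_::'k. 0::int) n"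
    have "W \<subseteq> Pi\<^sub>E UNIV (\<lambda>_. {0..int n})" unfolding W_def box_of_size_def PiE_UNIV_domain by auto
    then have finW: "finite W" by (rule finite_subset) (intro finite_PiE, auto)
    define I where "I = (UNIV :: 'k set) \<times> W"
    have finI: "finite I" unfolding I_def using finW by simp
    define P where "P = (\<lambda>x. SOME p. is_mpoly p \<and> (\<forall>z. mpoly_eval p z = mpoly_eval (A (fst x)) (\<lambda>j. z j + snd x j)))"
    have P: "is_mpoly (P x) \<and> (\<forall>z. mpoly_eval (P x) z = mpoly_eval (A (fst x)) (\<lambda>j. z j + snd x j))" for x
    proof -
      have "\<exists>p. is_mpoly p \<and> (\<forall>z. mpoly_eval p z = mpoly_eval (A (fst x)) (\<lambda>j. z j + snd x j))"
        using PF_shift[of "A (fst x)" "snd x"] AB unfolding PF_def by blast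
      then show ?thesis unfolding P_def by (rule someI_ex)
    qed
    have Pnz: "P x \<noteq> (\<lambda>_. 0)" for x
    proof
      assume P0: "P x = (\<lambda>_. 0)"
      obtain z0 where "mpoly_eval (A (fst x)) z0 \<noteq> 0"
        using kronecker[OF char, of "{A (fst x)}"] AB by auto
      moreover have "mpoly_eval (P x) (\<lambda>j. z0 j - snd x j) = mpoly_eval (A (fst x)) z0"
        using P[of x] by simp
      ultimately show False using P0 by simp
    qed
    obtain z1 where z1: "\<forall>p\<in>P ` I. mpoly_eval p z1 \<noteq> 0"
    proof -
      have "\<And>p. p \<in> P ` I \<Longrightarrow> is_mpoly p \<and> p \<noteq> (\<lambda>_. 0)" using P Pnz by auto
      from kronecker[OF char _ this] finI show ?thesis using that by blast
    qed
    have "PF (\<lambda>z. \<Prod>x\<in>I. mpoly_eval (P x) z)"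
      using finI by (intro PF_prod) (auto simp: PF_def intro: P[THEN conjunct1])
    then obtain R where R: "is_mpoly R" "\<And>z. mpoly_eval R z = (\<Prod>x\<in>I. mpoly_eval (P x) z)"
      unfolding PF_def by blast
    have "mpoly_eval R z1 \<noteq> 0" using R(2) z1 finI by (simp add: prod_zero_iff)
    then have "R \<noteq> (\<lambda>_. 0)" by auto
    then obtain c where c: "mpoly_eval R c * f c \<noteq> 0"
      using nzd R(1) unfolding zero_divisor_term_def by blast
    then have fc: "f c \<noteq> 0" by auto
    have Anz: "mpoly_eval (A i) z \<noteq> 0" if "z \<in> box_of_size c n" for z i
    proof -
      define w where "w = (\<lambda>j. z j - c j)"
      have "w \<in> W" using that unfolding W_def w_def box_of_size_def by (auto simp: algebra_simps)
      then have "(i, w) \<in> I" unfolding I_def by simp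
      moreover have "(\<Prod>x\<in>I. mpoly_eval (P x) c) \<noteq> 0" using c R(2) by auto
      ultimately have "mpoly_eval (P (i, w)) c \<noteq> 0" using finI by (auto simp: prod_zero_iff)
      moreover have "(\<lambda>j. c j + w j) = z" unfolding w_def by auto
      ultimately show ?thesis using P[of "(i, w)"] by simp
    qed
    have rel: "\<And>i z. mpoly_eval (A i) z * f z = mpoly_eval (B i) z * f (z(i := z i + 1))"
      using AB by blast
    show "\<exists>c. \<forall>z\<in>box_of_size c n. f z \<noteq> 0"
    proof (intro exI ballI)
      fix z assume z: "z \<in> box_of_size c n"
      show "f z \<noteq> 0"
        by (rule propagate[where A = "\<lambda>i z. mpoly_eval (A i) z" and B = "\<lambda>i z. mpoly_eval (B i) z", OF rel fc Anz z])
    qed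
  qed
  then show ?thesis by simp
qed
end
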